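(* Let $\mathcal{H}$ be a two-dimensional Hilbert space and let $\mathcal{N}$ be any trace-preserving completely positive (TPCP) map on $\mathcal{L}(\mathcal{H})$ (the noise). For a TPCP map $\mathcal{C}$ on $\mathcal{L}(\mathcal{H})$ (the ex-post control), define the average fidelity $$\bar F(\mathcal{C}):=\int_{\|\ket{\psi}\|=1} d\psi\, \braket{\psi|\mathcal{C}\circ\mathcal{N}(\ket{\psi}\bra{\psi})|\psi},$$ where $d\psi$ is the uniform probability measure on the unit sphere of $\mathcal{H}$. Then the maximum of $\bar F(\mathcal{C})$ over all TPCP maps $\mathcal{C}$ is attained by a unitary transformation, i.e. by a map of the form $\mathcal{C}(\rho)=W\rho W^\dagger$ with $W$ a unitary operator on $\mathcal{H}$.
   Context: $\mathcal{L}(\mathcal{H})$ denotes the set of linear operators on $\mathcal{H}$. *)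

theory Defs
  imports "HOL-Analysis.Analysis"
begin

type_synonym qvec = "complex ^ 2"
type_synonym qop = "complex ^ 2 ^ 2"

definition mtrace :: "qop \<Rightarrow> complex" where
  "mtrace A = (\<Sum>i\<in>UNIV. A $ i $ i)"

definition adj :: "qop \<Rightarrow> qop" where
  "adj A = (\<chi> i j. cnj (A $ j $ i))"

definition unitary_op :: "qop \<Rightarrow> bool" where
  "unitary_op W \<longleftrightarrow> W ** adj W = mat 1 \<and> adj W ** W = mat 1"

definition clinear_map :: "(qop \<Rightarrow> qop) \<Rightarrow> bool" where
  "clinear_map \<Phi> \<longleftrightarrow> (\<forall>A B. \<Phi> (A + B) = \<Phi> A + \<Phi> B) \<and>
     (\<forall>c A. \<Phi> (\<chi> i j. c * A $ i $ j) = (\<chi> i j. c * \<Phi> A $ i $ j))"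

text \<open>An operator on C^n \<otimes> H is represented as an n x n block matrix with blocks in L(H)
  (only the blocks with indices < n matter).\<close>
definition block_qform :: "nat \<Rightarrow> (nat \<Rightarrow> nat \<Rightarrow> qop) \<Rightarrow> (nat \<Rightarrow> qvec) \<Rightarrow> complex" where
  "block_qform n B v =
     (\<Sum>i<n. \<Sum>j<n. \<Sum>k\<in>UNIV. \<Sum>l\<in>UNIV. cnj (v i $ k) * (B i j) $ k $ l * v j $ l)"

definition block_psd :: "nat \<Rightarrow> (nat \<Rightarrow> nat \<Rightarrow> qop) \<Rightarrow> bool" where
  "block_psd n B \<longleftrightarrow> (\<forall>v. Im (block_qform n B v) = 0 \<and> Re (block_qform n B v) \<ge> 0)"

text \<open>Complete positivity: id_n \<otimes> \<Phi> is positive for every n.\<close>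
definition completely_positive :: "(qop \<Rightarrow> qop) \<Rightarrow> bool" where
  "completely_positive \<Phi> \<longleftrightarrow> clinear_map \<Phi> \<and>
     (\<forall>n B. block_psd n B \<longrightarrow> block_psd n (\<lambda>i j. \<Phi> (B i j)))"

definition trace_preserving :: "(qop \<Rightarrow> qop) \<Rightarrow> bool" where
  "trace_preserving \<Phi> \<longleftrightarrow> (\<forall>A. mtrace (\<Phi> A) = mtrace A)"

definition TPCP :: "(qop \<Rightarrow> qop) \<Rightarrow> bool" where
  "TPCP \<Phi> \<longleftrightarrow> completely_positive \<Phi> \<and> trace_preserving \<Phi>"

definition ketbra :: "qvec \<Rightarrow> qop" where
  "ketbra \<psi> = (\<chi> i j. \<psi> $ i * cnj (\<psi> $ j))"

definition expval :: "qvec \<Rightarrow> qop \<Rightarrow> complex" where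
  "expval \<psi> A = (\<Sum>i\<in>UNIV. \<Sum>j\<in>UNIV. cnj (\<psi> $ i) * A $ i $ j * \<psi> $ j)"

text \<open>Uniform (unitarily invariant) probability measure on the unit sphere of H = C^2 = R^4:
  the image of the uniform distribution on the unit ball under radial projection.\<close>
definition sphere_measure :: "qvec measure" where
  "sphere_measure = distr (uniform_measure lborel (ball 0 1)) borel (\<lambda>x. x /\<^sub>R norm x)"

definition avg_fidelity :: "(qop \<Rightarrow> qop) \<Rightarrow> (qop \<Rightarrow> qop) \<Rightarrow> real" where
  "avg_fidelity \<N> \<C> = (\<integral>\<psi>. Re (expval \<psi> (\<C> (\<N> (ketbra \<psi>)))) \<partial>sphere_measure)"

end

theory Submission
  imports Defs
begin


lemma lborel_iso:
  fixes L :: "'a::euclidean_space \<Rightarrow> 'b::euclidean_space"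
  assumes lin: "linear L" and inn: "\<And>x y. L x \<bullet> L y = x \<bullet> y" and bas: "L ` Basis = Basis"
    and inv1: "\<And>y. L (Li y) = y" and inv2: "\<And>x. Li (L x) = x"
  shows "distr lborel borel L = lborel"
proof (rule lborel_eqI[symmetric])
  have meas: "L \<in> borel_measurable lborel"
  proof -
    have "continuous_on UNIV L" using lin by (simp add: linear_continuous_on linear_conv_bounded_linear)
    then have "L \<in> borel_measurable borel" by (rule borel_measurable_continuous_onI)
    then show ?thesis by simp
  qed
  have key: "Li l \<bullet> b = l \<bullet> L b" for l b
    by (metis inn inv1)
  show "sets (distr lborel borel L) = sets borel" by simp
  fix l u :: 'b
  assume le: "\<And>b. b \<in> Basis \<Longrightarrow> l \<bullet> b \<le> u \<bullet> b"
  have pre: "L -` box l u = box (Li l) (Li u)"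
  proof -
    have "x \<in> L -` box l u \<longleftrightarrow> x \<in> box (Li l) (Li u)" for x
    proof -
      have "x \<in> L -` box l u \<longleftrightarrow> (\<forall>b\<in>L ` Basis. l \<bullet> b < L x \<bullet> b \<and> L x \<bullet> b < u \<bullet> b)"
        using bas by (simp add: mem_box)
      also have "\<dots> \<longleftrightarrow> (\<forall>b\<in>Basis. l \<bullet> L b < x \<bullet> b \<and> x \<bullet> b < u \<bullet> L b)"
        by (simp add: inn)
      also have "\<dots> \<longleftrightarrow> x \<in> box (Li l) (Li u)"
        by (simp add: mem_box key)
      finally show ?thesis .
    qed
    then show ?thesis by blast
  qed
  have le': "\<And>b. b \<in> Basis \<Longrightarrow> Li l \<bullet> b \<le> Li u \<bullet> b"
    using le bas by (auto simp: key)
  have injL: "inj_on L Basis"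
    by (metis inj_on_inverseI inv2)
  have "emeasure (distr lborel borel L) (box l u) = emeasure lborel (box (Li l) (Li u))"
    using meas by (simp add: emeasure_distr pre)
  also have "\<dots> = (\<Prod>b\<in>Basis. (Li u - Li l) \<bullet> b)"
    using le' by simp
  also have "\<dots> = (\<Prod>b\<in>Basis. (u - l) \<bullet> L b)"
    by (simp add: inner_diff_left key)
  also have "\<dots> = (\<Prod>b\<in>L ` Basis. (u - l) \<bullet> b)"
    using injL by (simp add: prod.reindex)
  also have "\<dots> = (\<Prod>b\<in>Basis. (u - l) \<bullet> b)" using bas by simp
  finally show "emeasure (distr lborel borel L) (box l u) = (\<Prod>b\<in>Basis. (u - l) \<bullet> b)" .
qed

lemma lborel_orth:
  fixes T :: "real^4 \<Rightarrow> real^4"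
  assumes T: "orthogonal_transformation T"
  shows "distr lborel borel T = lborel"
proof (rule lborel_eqI[symmetric])
  have cT: "continuous_on UNIV T" using orthogonal_transformation_linear[OF T]
    by (simp add: linear_continuous_on linear_conv_bounded_linear)
  then have tb: "T \<in> borel_measurable borel" by (rule borel_measurable_continuous_onI)
  then have meas: "T \<in> borel_measurable lborel" by simp
  show "sets (distr lborel borel T) = sets borel" by simp
  fix l u :: "real^4"
  assume le: "\<And>b. b \<in> Basis \<Longrightarrow> l \<bullet> b \<le> u \<bullet> b"
  have invT: "orthogonal_transformation (inv T)"
    using T orthogonal_transformation_inv by blast
  have bij: "bij T" using T orthogonal_transformation_bij by blast
  have X: "T -` box l u = inv T ` box l u"
    using bij by (simp add: bij_vimage_eq_inv_image)
  have S: "box l u \<in> lmeasurable" by simp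
  have Xl: "inv T ` box l u \<in> lmeasurable"
    by (rule measurable_orthogonal_image[OF invT S])
  have eqm: "measure lebesgue (inv T ` box l u) = measure lebesgue (box l u)"
    by (rule measure_orthogonal_image[OF invT S])
  have Xb: "T -` box l u \<in> sets borel"
    using measurable_sets_borel[OF tb, of "box l u"] by simp
  have "emeasure (distr lborel borel T) (box l u) = emeasure lborel (T -` box l u)"
    using meas by (simp add: emeasure_distr)
  also have "\<dots> = emeasure lebesgue (T -` box l u)"
    using Xb by (simp add: emeasure_completion)
  also have "\<dots> = ennreal (measure lebesgue (T -` box l u))"
    using Xl X by (simp add: emeasure_eq_measure2)
  also have "\<dots> = ennreal (measure lebesgue (box l u))"
    using X eqm by simp
  also have "\<dots> = emeasure lebesgue (box l u)"
    using S by (simp add: emeasure_eq_measure2)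
  also have "\<dots> = emeasure lborel (box l u)"
    by (simp add: emeasure_completion)
  also have "\<dots> = (\<Prod>b\<in>Basis. (u - l) \<bullet> b)" using le by simp
  finally show "emeasure (distr lborel borel T) (box l u) = (\<Prod>b\<in>Basis. (u - l) \<bullet> b)" .
qed
definition Lc :: "real^4 \<Rightarrow> complex^2" where
  "Lc x = (\<chi> i. if i = 1 then Complex (x$1) (x$2) else Complex (x$3) (x$4))"
definition Li :: "complex^2 \<Rightarrow> real^4" where
  "Li z = (\<chi> j. if j = 1 then Re (z$1) else if j = 2 then Im (z$1) else if j = 3 then Re (z$2) else Im (z$2))"

lemma Lc_Li: "Lc (Li z) = z"
  by (simp add: Lc_def Li_def vec_eq_iff forall_2 complex_eq_iff)

lemma Li_Lc: "Li (Lc x) = x"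
  by (simp add: Lc_def Li_def vec_eq_iff forall_4)

lemma Lc_inner: "Lc x \<bullet> Lc y = x \<bullet> y"
  by (simp add: Lc_def inner_vec_def sum_2 sum_4 inner_complex_def)

lemma Lc_linear: "linear Lc"
  by (rule linearI) (simp_all add: Lc_def vec_eq_iff forall_2 complex_eq_iff)

lemma Basis_r4: "(Basis :: (real^4) set) = {axis 1 1, axis 2 1, axis 3 1, axis 4 1}"
  by (auto simp: Basis_vec_def UNIV_4)

lemma Basis_c2: "(Basis :: (complex^2) set) = {axis 1 1, axis 1 \<i>, axis 2 1, axis 2 \<i>}"
  by (auto simp: Basis_vec_def UNIV_2 Basis_complex_def)

lemma Lc_Basis: "Lc ` Basis = Basis"
  unfolding Basis_r4 Basis_c2
  by (auto simp: Lc_def axis_def vec_eq_iff forall_2 complex_eq_iff)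


lemma linear_borel: "linear (f :: 'a::euclidean_space \<Rightarrow> 'b::euclidean_space) \<Longrightarrow> f \<in> borel_measurable borel"
  by (intro borel_measurable_continuous_onI linear_continuous_on iffD1[OF linear_conv_bounded_linear])

lemma lborel_Lc: "distr lborel borel Lc = lborel"
  by (rule lborel_iso[OF Lc_linear Lc_inner Lc_Basis Lc_Li Li_Lc])

lemma Li_linear: "linear Li"
  by (rule linearI) (simp_all add: Li_def vec_eq_iff forall_4)

lemma Li_inner: "Li x \<bullet> Li y = x \<bullet> y"
  by (metis Lc_Li Lc_inner)

lemma orth_conj:
  assumes T: "orthogonal_transformation T"
  shows "orthogonal_transformation (\<lambda>x. Li (T (Lc x)))"
  unfolding orthogonal_transformation_def
proof
  show "linear (\<lambda>x. Li (T (Lc x)))"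
    using linear_compose[OF linear_compose[OF Lc_linear orthogonal_transformation_linear[OF T]] Li_linear]
    by (simp add: o_def)
  show "\<forall>v w. Li (T (Lc v)) \<bullet> Li (T (Lc w)) = v \<bullet> w"
    using T by (simp add: Li_inner Lc_inner orthogonal_transformation_def)
qed

lemma lborel_c2_orth:
  assumes T: "orthogonal_transformation (T :: complex^2 \<Rightarrow> complex^2)"
  shows "distr lborel borel T = lborel"
proof -
  define T' where "T' = (\<lambda>x. Li (T (Lc x)))"
  have oT': "orthogonal_transformation T'" unfolding T'_def by (rule orth_conj[OF T])
  have mT: "T \<in> borel_measurable borel" by (rule linear_borel[OF orthogonal_transformation_linear[OF T]])
  have mT': "T' \<in> borel_measurable borel" by (rule linear_borel[OF orthogonal_transformation_linear[OF oT']])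
  have mL: "Lc \<in> borel_measurable borel" by (rule linear_borel[OF Lc_linear])
  have eq: "T \<circ> Lc = Lc \<circ> T'" by (simp add: T'_def o_def Lc_Li fun_eq_iff)
  have "distr lborel borel T = distr (distr lborel borel Lc) borel T" by (simp add: lborel_Lc)
  also have "\<dots> = distr lborel borel (T \<circ> Lc)"
    by (rule distr_distr) (use mT mL in simp_all)
  also have "\<dots> = distr lborel borel (Lc \<circ> T')" by (simp add: eq)
  also have "\<dots> = distr (distr lborel borel T') borel Lc"
    by (rule distr_distr[symmetric]) (use mT' mL in simp_all)
  also have "\<dots> = lborel" by (simp add: lborel_orth[OF oT'] lborel_Lc)
  finally show ?thesis .
qed

lemma orth_exists_c2:
  fixes a b :: "complex^2"
  assumes "norm a = norm b"
  obtains T where "orthogonal_transformation T" "T a = b"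
proof -
  have "norm (Li a) = norm (Li b)"
    using assms by (simp add: norm_eq_sqrt_inner Li_inner)
  then obtain f where f: "orthogonal_transformation f" "f (Li a) = Li b"
    by (rule orthogonal_transformation_exists)
  have "orthogonal_transformation (\<lambda>x. Lc (f (Li x)))"
    unfolding orthogonal_transformation_def
  proof
    show "linear (\<lambda>x. Lc (f (Li x)))"
      using linear_compose[OF linear_compose[OF Li_linear orthogonal_transformation_linear[OF f(1)]] Lc_linear]
      by (simp add: o_def)
    show "\<forall>v w. Lc (f (Li v)) \<bullet> Lc (f (Li w)) = v \<bullet> w"
      using f(1) by (simp add: Li_inner Lc_inner orthogonal_transformation_def)
  qed
  moreover have "Lc (f (Li a)) = b" using f(2) by (simp add: Lc_Li)
  ultimately show ?thesis using that by blast
qed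


abbreviation "Bc \<equiv> ball (0::complex^2) 1"
abbreviation "Uc \<equiv> uniform_measure lborel Bc"
definition proj :: "complex^2 \<Rightarrow> complex^2" where "proj x = x /\<^sub>R norm x"

lemma proj_meas: "proj \<in> borel_measurable borel"
  unfolding proj_def by measurable

lemma sphere_def2: "sphere_measure = distr Uc borel proj"
  by (simp add: sphere_measure_def proj_def[abs_def])

lemma sets_sphere[measurable_cong]: "sets sphere_measure = sets borel"
  by (simp add: sphere_def2)

lemma space_sphere: "space sphere_measure = UNIV"
  by (simp add: sphere_def2)

lemma emeasure_Bc: "emeasure lborel Bc \<noteq> 0" "emeasure lborel Bc \<noteq> \<infinity>"
proof -
  show "emeasure lborel Bc \<noteq> \<infinity>" using emeasure_lborel_ball_finite[of "0::complex^2" 1] by simp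
  then show "emeasure lborel Bc \<noteq> 0"
    using content_ball_pos[of 1 "0::complex^2"]
    by (simp add: emeasure_eq_ennreal_measure)
qed

lemma Uc_one: "emeasure Uc UNIV = 1"
proof -
  have "emeasure Uc UNIV = emeasure lborel (Bc \<inter> UNIV) / emeasure lborel Bc"
    by (simp add: emeasure_uniform_measure)
  then show ?thesis
    using emeasure_Bc by (simp add: divide_eq_1_ennreal)
qed

lemma sphere_one: "emeasure sphere_measure UNIV = 1"
proof -
  have "emeasure sphere_measure UNIV = emeasure Uc (proj -` UNIV \<inter> space Uc)"
    unfolding sphere_def2 by (rule emeasure_distr) (use proj_meas in simp_all)
  then show ?thesis using Uc_one by simp
qed

lemma sphere_finite: "finite_measure sphere_measure"
  by (rule finite_measureI) (simp add: space_sphere sphere_one)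

lemma Uc_orth:
  assumes T: "orthogonal_transformation (T :: complex^2 \<Rightarrow> complex^2)"
  shows "distr Uc borel T = Uc"
proof (rule measure_eqI)
  have mT: "T \<in> borel_measurable borel" by (rule linear_borel[OF orthogonal_transformation_linear[OF T]])
  show "sets (distr Uc borel T) = sets Uc" by simp
  fix X assume X: "X \<in> sets (distr Uc borel T)"
  then have Xb: "X \<in> sets borel" by simp
  have preB: "T -` Bc = Bc"
    using T by (auto simp: orthogonal_transformation_norm)
  have pre: "T -` (Bc \<inter> X) = Bc \<inter> T -` X"
    using preB by auto
  have TX: "T -` X \<in> sets borel" using measurable_sets_borel[OF mT Xb] by simp
  have "emeasure (distr Uc borel T) X = emeasure Uc (T -` X)"
    using mT Xb by (simp add: emeasure_distr)
  also have "\<dots> = emeasure lborel (Bc \<inter> T -` X) / emeasure lborel Bc"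
    using TX by (simp add: emeasure_uniform_measure)
  also have "emeasure lborel (Bc \<inter> T -` X) = emeasure (distr lborel borel T) (Bc \<inter> X)"
    using mT Xb by (simp add: emeasure_distr preB)
  also have "\<dots> = emeasure lborel (Bc \<inter> X)" by (simp add: lborel_c2_orth[OF T])
  finally show "emeasure (distr Uc borel T) X = emeasure Uc X"
    using Xb by (simp add: emeasure_uniform_measure)
qed

lemma proj_orth:
  assumes T: "orthogonal_transformation T"
  shows "T (proj x) = proj (T x)"
  using T by (simp add: proj_def orthogonal_transformation_scaleR orthogonal_transformation_norm)

lemma sphere_orth:
  assumes T: "orthogonal_transformation (T :: complex^2 \<Rightarrow> complex^2)"
  shows "distr sphere_measure borel T = sphere_measure"
proof -
  have mT: "T \<in> borel_measurable borel" by (rule linear_borel[OF orthogonal_transformation_linear[OF T]])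
  have eq: "T \<circ> proj = proj \<circ> T" using proj_orth[OF T] by (simp add: fun_eq_iff)
  have "distr sphere_measure borel T = distr Uc borel (T \<circ> proj)"
    unfolding sphere_def2 by (rule distr_distr) (use mT proj_meas in simp_all)
  also have "\<dots> = distr Uc borel (proj \<circ> T)" by (simp add: eq)
  also have "\<dots> = distr (distr Uc borel T) borel proj"
    by (rule distr_distr[symmetric]) (use mT proj_meas in simp_all)
  also have "\<dots> = sphere_measure" by (simp add: Uc_orth[OF T] sphere_def2)
  finally show ?thesis .
qed

lemma sphere_integral_orth:
  fixes f :: "complex^2 \<Rightarrow> 'b::{banach,second_countable_topology}"
  assumes T: "orthogonal_transformation T" and f: "f \<in> borel_measurable borel"
  shows "(\<integral>x. f (T x) \<partial>sphere_measure) = (\<integral>x. f x \<partial>sphere_measure)"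
proof -
  have mT: "T \<in> borel_measurable borel" by (rule linear_borel[OF orthogonal_transformation_linear[OF T]])
  have "(\<integral>x. f x \<partial>sphere_measure) = (\<integral>x. f x \<partial>distr sphere_measure borel T)"
    by (simp add: sphere_orth[OF T])
  also have "\<dots> = (\<integral>x. f (T x) \<partial>sphere_measure)"
    by (rule integral_distr) (use mT f in simp_all)
  finally show ?thesis by simp
qed

lemma sphere_AE_norm: "AE x in sphere_measure. norm x \<le> 1"
proof -
  have "\<forall>x. norm (proj x) \<le> 1"
  proof
    fix x :: "complex^2" show "norm (proj x) \<le> 1" by (cases "x = 0") (simp_all add: proj_def)
  qed
  then show ?thesis unfolding sphere_def2
    by (subst AE_distr_iff) (use proj_meas in auto)
qed

lemma sphere_integrable:
  fixes f :: "complex^2 \<Rightarrow> 'b::{banach,second_countable_topology}"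
  assumes f: "continuous_on UNIV f"
  shows "integrable sphere_measure f"
proof -
  interpret finite_measure sphere_measure by (rule sphere_finite)
  have "compact (f ` cball 0 1)"
    by (rule compact_continuous_image[OF continuous_on_subset[OF f] compact_cball]) simp
  then obtain B where B: "\<And>y. y \<in> f ` cball 0 1 \<Longrightarrow> norm y \<le> B"
    by (meson bounded_iff compact_imp_bounded)
  have fm: "f \<in> borel_measurable borel" using f by (rule borel_measurable_continuous_onI)
  show ?thesis
  proof (rule integrable_const_bound[where B=B])
    show "AE x in sphere_measure. norm (f x) \<le> B"
      using sphere_AE_norm by eventually_elim (use B in auto)
    show "f \<in> borel_measurable sphere_measure"
      using fm by (simp add: measurable_cong_sets[OF sets_sphere refl])
  qed
qed


abbreviation "\<mu> \<equiv> sphere_measure"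
definition e0 :: "complex^2" where "e0 = axis 1 1"
definition aa :: real where "aa = (\<integral>x. (e0 \<bullet> x)^4 \<partial>\<mu>)"

lemma norm_e0: "norm e0 = 1" by (simp add: e0_def)

lemma int_pow4: "integrable \<mu> (\<lambda>x. (P \<bullet> x)^4 :: real)"
  by (rule sphere_integrable) (intro continuous_intros)

lemma diag4: "(\<integral>x. (P \<bullet> x)^4 \<partial>\<mu>) = aa * norm P ^ 4"
proof -
  have "norm (norm P *\<^sub>R e0) = norm P" by (simp add: norm_e0)
  then obtain T where T: "orthogonal_transformation T" "T (norm P *\<^sub>R e0) = P"
    by (rule orth_exists_c2)
  have eq: "P \<bullet> T x = norm P * (e0 \<bullet> x)" for x
  proof -
    have "P \<bullet> T x = T (norm P *\<^sub>R e0) \<bullet> T x" using T(2) by simp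
    also have "\<dots> = (norm P *\<^sub>R e0) \<bullet> x" using T(1) by (simp add: orthogonal_transformation_def)
    finally show ?thesis by simp
  qed
  have fm: "(\<lambda>x. (P \<bullet> x)^4) \<in> borel_measurable borel" by measurable
  have "(\<integral>x. (P \<bullet> x)^4 \<partial>\<mu>) = (\<integral>x. (P \<bullet> T x)^4 \<partial>\<mu>)"
    using sphere_integral_orth[OF T(1) fm] by simp
  also have "\<dots> = (\<integral>x. norm P ^ 4 * (e0 \<bullet> x)^4 \<partial>\<mu>)"
    by (simp add: eq power_mult_distrib)
  also have "\<dots> = aa * norm P ^ 4" by (simp add: aa_def)
  finally show ?thesis .
qed

lemma pol4:
  fixes A B C D :: "'a::field_char_0"
  shows "A*B*C*D = ((A+B+C+D)^4 - (A+B+C-D)^4 - (A+B-C+D)^4 + (A+B-C-D)^4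
     - (A-B+C+D)^4 + (A-B+C-D)^4 + (A-B-C+D)^4 - (A-B-C-D)^4) / 192"
  by (simp add: field_simps power4_eq_xxxx)

lemma wick_real:
  "(\<integral>x. (p \<bullet> x) * (q \<bullet> x) * (r \<bullet> x) * (s \<bullet> x) \<partial>\<mu>) =
     aa / 3 * ((p \<bullet> q) * (r \<bullet> s) + (p \<bullet> r) * (q \<bullet> s) + (p \<bullet> s) * (q \<bullet> r))"
proof -
  let ?F = "\<lambda>P. (\<integral>x. (P \<bullet> x)^4 \<partial>\<mu>)"
  have pt: "(p \<bullet> x) * (q \<bullet> x) * (r \<bullet> x) * (s \<bullet> x) =
     (((p+q+r+s) \<bullet> x)^4 - ((p+q+r-s) \<bullet> x)^4 - ((p+q-r+s) \<bullet> x)^4 + ((p+q-r-s) \<bullet> x)^4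
     - ((p-q+r+s) \<bullet> x)^4 + ((p-q+r-s) \<bullet> x)^4 + ((p-q-r+s) \<bullet> x)^4 - ((p-q-r-s) \<bullet> x)^4) / 192" for x
    by (simp only: inner_add_left inner_diff_left pol4)
  have "(\<integral>x. (p \<bullet> x) * (q \<bullet> x) * (r \<bullet> x) * (s \<bullet> x) \<partial>\<mu>) =
     (?F (p+q+r+s) - ?F (p+q+r-s) - ?F (p+q-r+s) + ?F (p+q-r-s)
     - ?F (p-q+r+s) + ?F (p-q+r-s) + ?F (p-q-r+s) - ?F (p-q-r-s)) / 192"
    unfolding pt by (simp add: int_pow4)
  also have "\<dots> = aa / 3 * ((p \<bullet> q) * (r \<bullet> s) + (p \<bullet> r) * (q \<bullet> s) + (p \<bullet> s) * (q \<bullet> r))"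
    unfolding diag4 norm_eq_sqrt_inner
    by (simp add: power4_eq_xxxx inner_add_left inner_add_right inner_diff_left inner_diff_right
        inner_commute field_simps)
  finally show ?thesis .
qed


definition lf :: "complex^2 \<Rightarrow> complex^2 \<Rightarrow> complex^2 \<Rightarrow> complex" where
  "lf U V x = Complex (U \<bullet> x) (V \<bullet> x)"
definition bt :: "complex^2 \<Rightarrow> complex^2 \<Rightarrow> complex^2 \<Rightarrow> complex^2 \<Rightarrow> complex" where
  "bt U V W Z = Complex (U \<bullet> W - V \<bullet> Z) (U \<bullet> Z + V \<bullet> W)"

lemma int_prod4: "integrable \<mu> (\<lambda>x. (p \<bullet> x) * (q \<bullet> x) * (r \<bullet> x) * (s \<bullet> x) :: real)"
  by (rule sphere_integrable) (intro continuous_intros)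

lemma lf_eq: "lf U V x = complex_of_real (U \<bullet> x) + \<i> * complex_of_real (V \<bullet> x)"
  by (simp add: lf_def complex_eq_iff)

lemma diag_c: "(\<integral>x. lf U V x ^ 4 \<partial>\<mu>) = complex_of_real aa * (bt U V U V)^2"
proof -
  define X where "X x = (U \<bullet> x) * (U \<bullet> x) * (U \<bullet> x) * (U \<bullet> x) - 6 * ((U \<bullet> x) * (U \<bullet> x) * (V \<bullet> x) * (V \<bullet> x))
      + (V \<bullet> x) * (V \<bullet> x) * (V \<bullet> x) * (V \<bullet> x)" for x
  define Y where "Y x = 4 * ((U \<bullet> x) * (U \<bullet> x) * (U \<bullet> x) * (V \<bullet> x)) - 4 * ((U \<bullet> x) * (V \<bullet> x) * (V \<bullet> x) * (V \<bullet> x))" for x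
  have pt: "lf U V x ^ 4 = complex_of_real (X x) + \<i> * complex_of_real (Y x)" for x
    by (simp add: lf_def X_def Y_def complex_eq_iff power4_eq_xxxx algebra_simps)
  have iX: "integrable \<mu> X" unfolding X_def by (simp add: int_prod4)
  have iY: "integrable \<mu> Y" unfolding Y_def by (simp add: int_prod4)
  have "(\<integral>x. lf U V x ^ 4 \<partial>\<mu>) = complex_of_real (\<integral>x. X x \<partial>\<mu>) + \<i> * complex_of_real (\<integral>x. Y x \<partial>\<mu>)"
    unfolding pt using iX iY by simp
  also have "(\<integral>x. X x \<partial>\<mu>) = aa * (U \<bullet> U) * (U \<bullet> U) - 6 * (aa / 3 * ((U \<bullet> U) * (V \<bullet> V) + 2 * (U \<bullet> V) * (U \<bullet> V)))
      + aa * (V \<bullet> V) * (V \<bullet> V)"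
  proof -
    have "(\<integral>x. X x \<partial>\<mu>) = (\<integral>x. (U \<bullet> x) * (U \<bullet> x) * (U \<bullet> x) * (U \<bullet> x) \<partial>\<mu>)
       - 6 * (\<integral>x. (U \<bullet> x) * (U \<bullet> x) * (V \<bullet> x) * (V \<bullet> x) \<partial>\<mu>)
       + (\<integral>x. (V \<bullet> x) * (V \<bullet> x) * (V \<bullet> x) * (V \<bullet> x) \<partial>\<mu>)"
      unfolding X_def by (simp add: int_prod4)
    then show ?thesis by (simp only: wick_real) (simp add: inner_commute algebra_simps)
  qed
  also have "(\<integral>x. Y x \<partial>\<mu>) = 4 * (aa * (U \<bullet> U) * (U \<bullet> V)) - 4 * (aa * (V \<bullet> V) * (U \<bullet> V))"
  proof -
    have "(\<integral>x. Y x \<partial>\<mu>) = 4 * (\<integral>x. (U \<bullet> x) * (U \<bullet> x) * (U \<bullet> x) * (V \<bullet> x) \<partial>\<mu>)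
       - 4 * (\<integral>x. (U \<bullet> x) * (V \<bullet> x) * (V \<bullet> x) * (V \<bullet> x) \<partial>\<mu>)"
      unfolding Y_def by (simp add: int_prod4)
    then show ?thesis by (simp only: wick_real) (simp add: inner_commute algebra_simps)
  qed
  finally show ?thesis
    by (simp add: bt_def complex_eq_iff power2_eq_square algebra_simps inner_commute)
qed

lemma lf_add: "lf U1 V1 x + lf U2 V2 x = lf (U1 + U2) (V1 + V2) x"
  by (simp add: lf_def complex_eq_iff inner_add_left)
lemma lf_diff: "lf U1 V1 x - lf U2 V2 x = lf (U1 - U2) (V1 - V2) x"
  by (simp add: lf_def complex_eq_iff inner_diff_left)

lemma bt_add1: "bt (U1 + U2) (V1 + V2) W Z = bt U1 V1 W Z + bt U2 V2 W Z"
  by (simp add: bt_def complex_eq_iff inner_add_left)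
lemma bt_diff1: "bt (U1 - U2) (V1 - V2) W Z = bt U1 V1 W Z - bt U2 V2 W Z"
  by (simp add: bt_def complex_eq_iff inner_diff_left)
lemma bt_add2: "bt W Z (U1 + U2) (V1 + V2) = bt W Z U1 V1 + bt W Z U2 V2"
  by (simp add: bt_def complex_eq_iff inner_add_right)
lemma bt_diff2: "bt W Z (U1 - U2) (V1 - V2) = bt W Z U1 V1 - bt W Z U2 V2"
  by (simp add: bt_def complex_eq_iff inner_diff_right)
lemma bt_sym: "bt W Z U V = bt U V W Z"
  by (simp add: bt_def complex_eq_iff inner_commute)

lemma int_lf4: "integrable \<mu> (\<lambda>x. lf U V x ^ 4)"
  unfolding lf_def by (rule sphere_integrable) (intro continuous_intros)

lemma wick_c:
  "(\<integral>x. lf U1 V1 x * lf U2 V2 x * lf U3 V3 x * lf U4 V4 x \<partial>\<mu>) =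
    complex_of_real aa / 3 * (bt U1 V1 U2 V2 * bt U3 V3 U4 V4 + bt U1 V1 U3 V3 * bt U2 V2 U4 V4
       + bt U1 V1 U4 V4 * bt U2 V2 U3 V3)"
proof -
  let ?F = "\<lambda>U V. (\<integral>x. lf U V x ^ 4 \<partial>\<mu>)"
  have pt: "lf U1 V1 x * lf U2 V2 x * lf U3 V3 x * lf U4 V4 x =
     (lf (U1+U2+U3+U4) (V1+V2+V3+V4) x ^4 - lf (U1+U2+U3-U4) (V1+V2+V3-V4) x ^4
     - lf (U1+U2-U3+U4) (V1+V2-V3+V4) x ^4 + lf (U1+U2-U3-U4) (V1+V2-V3-V4) x ^4
     - lf (U1-U2+U3+U4) (V1-V2+V3+V4) x ^4 + lf (U1-U2+U3-U4) (V1-V2+V3-V4) x ^4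
     + lf (U1-U2-U3+U4) (V1-V2-V3+V4) x ^4 - lf (U1-U2-U3-U4) (V1-V2-V3-V4) x ^4) / 192" for x
    by (simp only: lf_add[symmetric] lf_diff[symmetric] pol4)
  have "(\<integral>x. lf U1 V1 x * lf U2 V2 x * lf U3 V3 x * lf U4 V4 x \<partial>\<mu>) =
     (?F (U1+U2+U3+U4) (V1+V2+V3+V4) - ?F (U1+U2+U3-U4) (V1+V2+V3-V4)
     - ?F (U1+U2-U3+U4) (V1+V2-V3+V4) + ?F (U1+U2-U3-U4) (V1+V2-V3-V4)
     - ?F (U1-U2+U3+U4) (V1-V2+V3+V4) + ?F (U1-U2+U3-U4) (V1-V2+V3-V4)
     + ?F (U1-U2-U3+U4) (V1-V2-V3+V4) - ?F (U1-U2-U3-U4) (V1-V2-V3-V4)) / 192"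
    unfolding pt by (simp add: int_lf4)
  also have "\<dots> = complex_of_real aa / 3 * (bt U1 V1 U2 V2 * bt U3 V3 U4 V4 + bt U1 V1 U3 V3 * bt U2 V2 U4 V4
       + bt U1 V1 U4 V4 * bt U2 V2 U3 V3)"
    unfolding diag_c
    apply (simp only: bt_add1 bt_diff1 bt_add2 bt_diff2)
    apply (simp add: bt_sym[of U2 V2 U1 V1] bt_sym[of U3 V3 U1 V1] bt_sym[of U4 V4 U1 V1]
       bt_sym[of U3 V3 U2 V2] bt_sym[of U4 V4 U2 V2] bt_sym[of U4 V4 U3 V3])
    apply (simp add: field_simps power2_eq_square)
    done
  finally show ?thesis .
qed


lemma psi_lf: "x$k = lf (axis k 1) (axis k \<i>) x"
  by (simp add: lf_def inner_axis' complex_eq_iff inner_complex_def)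

lemma cpsi_lf: "cnj (x$k) = lf (axis k 1) (- axis k \<i>) x"
  by (simp add: lf_def inner_axis' complex_eq_iff inner_complex_def)

lemma bt_ax: "bt (axis k 1) V1 (axis l 1) V2 = Complex ((if k = l then 1 else 0) - V1 \<bullet> V2) (V1 \<bullet> axis l 1 + axis k 1 \<bullet> V2)"
  by (simp add: bt_def inner_axis_axis)

lemma moment:
  "(\<integral>x. cnj (x$i) * x$j * x$a * cnj (x$b) \<partial>\<mu>) =
     complex_of_real (4 * aa / 3) * ((if i = j \<and> a = b then 1 else 0) + (if i = a \<and> j = b then 1 else 0))"
  unfolding psi_lf[of _ j] psi_lf[of _ a] cpsi_lf wick_c
  by (simp add: bt_def inner_axis_axis inner_complex_def complex_eq_iff)

lemma int_moment: "integrable \<mu> (\<lambda>x. cnj (x$i) * x$j * x$a * cnj (x$b))"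
  unfolding psi_lf[of _ j] psi_lf[of _ a] cpsi_lf lf_def
  by (rule sphere_integrable) (intro continuous_intros)


definition Em :: "2 \<Rightarrow> 2 \<Rightarrow> qop" where "Em a b = (\<chi> k l. if k = a \<and> l = b then 1 else 0)"
definition sm :: "complex \<Rightarrow> qop \<Rightarrow> qop" where "sm c A = (\<chi> i j. c * A$i$j)"

lemma clin_add: "clinear_map M \<Longrightarrow> M (A + B) = M A + M B"
  by (simp add: clinear_map_def)
lemma clin_sm: "clinear_map M \<Longrightarrow> M (sm c A) = sm c (M A)"
  by (simp add: clinear_map_def sm_def)

lemma mat_expand: "A = sm (A$1$1) (Em 1 1) + sm (A$1$2) (Em 1 2) + sm (A$2$1) (Em 2 1) + sm (A$2$2) (Em 2 2)"
  by (simp add: vec_eq_iff forall_2 Em_def sm_def)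

lemma clin_expand: "clinear_map M \<Longrightarrow>
   M A = sm (A$1$1) (M (Em 1 1)) + sm (A$1$2) (M (Em 1 2)) + sm (A$2$1) (M (Em 2 1)) + sm (A$2$2) (M (Em 2 2))"
  by (subst mat_expand) (simp add: clin_add clin_sm)

lemma clin_comp: "clinear_map C \<Longrightarrow> clinear_map N \<Longrightarrow> clinear_map (\<lambda>A. C (N A))"
  unfolding clinear_map_def by simp

definition Gf :: "(qop \<Rightarrow> qop) \<Rightarrow> complex" where
  "Gf M = (\<Sum>a\<in>UNIV. \<Sum>b\<in>UNIV. M (Em a b) $ a $ b)"

lemma expval_expand:
  assumes "clinear_map M"
  shows "expval x (M (ketbra x)) = (\<Sum>i\<in>UNIV. \<Sum>j\<in>UNIV. \<Sum>a\<in>UNIV. \<Sum>b\<in>UNIV.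
      M (Em a b) $ i $ j * (cnj (x$i) * x$j * x$a * cnj (x$b)))"
  apply (subst clin_expand[OF assms])
  apply (simp add: expval_def sum_2 ketbra_def sm_def)
  apply (simp add: algebra_simps)
  done

lemma aa_nonneg: "0 \<le> aa"
  unfolding aa_def by (rule integral_nonneg_AE) simp

lemma fid_formula:
  assumes "clinear_map M" and tp: "\<And>a. mtrace (M (Em a a)) = 1"
  shows "(\<integral>x. Re (expval x (M (ketbra x))) \<partial>\<mu>) = 4 * aa / 3 * (2 + Re (Gf M))"
proof -
  have int: "integrable \<mu> (\<lambda>x. expval x (M (ketbra x)))"
    unfolding expval_expand[OF assms(1)] by (simp add: int_moment)
  have "(\<integral>x. expval x (M (ketbra x)) \<partial>\<mu>) = (\<Sum>i\<in>UNIV. \<Sum>j\<in>UNIV. \<Sum>a\<in>UNIV. \<Sum>b\<in>UNIV.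
      M (Em a b) $ i $ j * (complex_of_real (4 * aa / 3) * ((if i = j \<and> a = b then 1 else 0) + (if i = a \<and> j = b then 1 else 0))))"
    unfolding expval_expand[OF assms(1)] by (simp add: int_moment integral_sum moment)
  also have "\<dots> = complex_of_real (4 * aa / 3) * (2 + Gf M)"
  proof -
    have t1: "M (Em 1 1)$2$2 = 1 - M (Em 1 1)$1$1" using tp[of 1] by (simp add: mtrace_def sum_2 algebra_simps)
    have t2: "M (Em 2 2)$1$1 = 1 - M (Em 2 2)$2$2" using tp[of 2] by (simp add: mtrace_def sum_2 algebra_simps)
    show ?thesis by (simp add: sum_2 Gf_def t1 t2 field_simps)
  qed
  finally have eqI: "(\<integral>x. expval x (M (ketbra x)) \<partial>\<mu>) = complex_of_real (4 * aa / 3) * (2 + Gf M)" .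
  have reI: "Re (complex_of_real (4 * aa / 3) * (2 + Gf M)) = 4 * aa / 3 * (2 + Re (Gf M))"
    by simp
  have "(\<integral>x. Re (expval x (M (ketbra x))) \<partial>\<mu>) = Re (\<integral>x. expval x (M (ketbra x)) \<partial>\<mu>)"
    using int by simp
  also have "\<dots> = 4 * aa / 3 * (2 + Re (Gf M))" unfolding eqI reI ..
  finally show ?thesis .
qed


lemma qf_two:
  fixes A :: "'a::finite \<Rightarrow> 'a \<Rightarrow> complex"
  shows "(\<Sum>\<alpha>\<in>UNIV. \<Sum>\<beta>\<in>UNIV. cnj (a * (if \<alpha> = p then 1 else 0) + b * (if \<alpha> = q then 1 else 0)) * A \<alpha> \<beta> *
      (a * (if \<beta> = p then 1 else 0) + b * (if \<beta> = q then 1 else 0)))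
    = cnj a * (a * A p p + b * A p q) + cnj b * (a * A q p + b * A q q)"
proof -
  have inner: "(\<Sum>\<beta>\<in>UNIV. A \<alpha> \<beta> * (a * (if \<beta> = p then 1 else 0) + b * (if \<beta> = q then 1 else 0))) = a * A \<alpha> p + b * A \<alpha> q" for \<alpha>
  proof -
    have "(\<Sum>\<beta>\<in>UNIV. A \<alpha> \<beta> * (a * (if \<beta> = p then 1 else 0) + b * (if \<beta> = q then 1 else 0)))
       = (\<Sum>\<beta>\<in>UNIV. (if \<beta> = p then a * A \<alpha> p else 0) + (if \<beta> = q then b * A \<alpha> q else 0))"
      by (rule sum.cong) (auto simp: algebra_simps)
    then show ?thesis by (simp add: sum.distrib)
  qed
  have "(\<Sum>\<alpha>\<in>UNIV. \<Sum>\<beta>\<in>UNIV. cnj (a * (if \<alpha> = p then 1 else 0) + b * (if \<alpha> = q then 1 else 0)) * A \<alpha> \<beta> *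
      (a * (if \<beta> = p then 1 else 0) + b * (if \<beta> = q then 1 else 0)))
     = (\<Sum>\<alpha>\<in>UNIV. cnj (a * (if \<alpha> = p then 1 else 0) + b * (if \<alpha> = q then 1 else 0)) * (a * A \<alpha> p + b * A \<alpha> q))"
    by (simp add: mult.assoc sum_distrib_left[symmetric] inner)
  also have "\<dots> = (\<Sum>\<alpha>\<in>UNIV. (if \<alpha> = p then cnj a * (a * A p p + b * A p q) else 0) + (if \<alpha> = q then cnj b * (a * A q p + b * A q q) else 0))"
    by (rule sum.cong) (auto simp: algebra_simps)
  also have "\<dots> = cnj a * (a * A p p + b * A p q) + cnj b * (a * A q p + b * A q q)"
    by (simp add: sum.distrib)
  finally show ?thesis .
qed

lemma herm_from_real:
  fixes A :: "'a::finite \<Rightarrow> 'a \<Rightarrow> complex"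
  assumes re: "\<And>z. Im (\<Sum>\<alpha>\<in>UNIV. \<Sum>\<beta>\<in>UNIV. cnj (z \<alpha>) * A \<alpha> \<beta> * z \<beta>) = 0"
  shows "A q p = cnj (A p q)"
proof -
  have e: "Im (cnj a * (a * A p p + b * A p q) + cnj b * (a * A q p + b * A q q)) = 0" for a b
    using re[of "\<lambda>\<alpha>. a * (if \<alpha> = p then 1 else 0) + b * (if \<alpha> = q then 1 else 0)"] by (simp only: qf_two)
  have 1: "Im (A p p) = 0" using e[of 1 0] by simp
  have 2: "Im (A q q) = 0" using e[of 0 1] by simp
  have 3: "Im (A p q + A q p) = 0" using e[of 1 1] 1 2 by simp
  have 4: "Re (A p q - A q p) = 0" using e[of 1 \<i>] 1 2 by (simp add: algebra_simps)
  show ?thesis using 3 4 by (simp add: complex_eq_iff)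
qed


definition Yb :: "4 \<Rightarrow> qop" where
  "Yb m = (if m = 1 then (\<chi> i j. if i = j then 1 else 0)
     else if m = 2 then (\<chi> i j. if i = j then 0 else \<i>)
     else if m = 3 then (\<chi> i j. if i = j then 0 else if i = 1 then 1 else -1)
     else (\<chi> i j. if i = j then (if i = 1 then \<i> else -\<i>) else 0))"

definition rho :: "(2\<Rightarrow>2\<Rightarrow>2\<Rightarrow>2\<Rightarrow>complex) \<Rightarrow> 4 \<Rightarrow> 4 \<Rightarrow> complex" where
  "rho n m v = (\<Sum>a\<in>UNIV. \<Sum>b\<in>UNIV. \<Sum>c\<in>UNIV. \<Sum>d\<in>UNIV. Yb m $ a $ c * n a b c d * cnj (Yb v $ b $ d))"
definition Pf :: "(2\<Rightarrow>2\<Rightarrow>2\<Rightarrow>2\<Rightarrow>complex) \<Rightarrow> 4 \<Rightarrow> 4 \<Rightarrow> complex" where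
  "Pf k m v = (\<Sum>a\<in>UNIV. \<Sum>b\<in>UNIV. \<Sum>c\<in>UNIV. \<Sum>d\<in>UNIV. cnj (Yb m $ a $ c) * Yb v $ b $ d * k c d a b)"

lemma Yb_simps:
  "Yb 1 $ 1 $ 1 = 1" "Yb 1 $ 1 $ 2 = 0" "Yb 1 $ 2 $ 1 = 0" "Yb 1 $ 2 $ 2 = 1"
  "Yb 2 $ 1 $ 1 = 0" "Yb 2 $ 1 $ 2 = \<i>" "Yb 2 $ 2 $ 1 = \<i>" "Yb 2 $ 2 $ 2 = 0"
  "Yb 3 $ 1 $ 1 = 0" "Yb 3 $ 1 $ 2 = 1" "Yb 3 $ 2 $ 1 = -1" "Yb 3 $ 2 $ 2 = 0"
  "Yb 4 $ 1 $ 1 = \<i>" "Yb 4 $ 1 $ 2 = 0" "Yb 4 $ 2 $ 1 = 0" "Yb 4 $ 2 $ 2 = -\<i>"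
  by (simp_all add: Yb_def)

lemma rho_explicit:
  "rho n 1 1 = n 1 1 1 1 + n 1 2 1 2 + n 2 1 2 1 + n 2 2 2 2"
  "rho n 1 2 = 0 - \<i> * n 1 1 1 2 - \<i> * n 1 2 1 1 - \<i> * n 2 1 2 2 - \<i> * n 2 2 2 1"
  "rho n 1 3 = n 1 1 1 2 - n 1 2 1 1 + n 2 1 2 2 - n 2 2 2 1"
  "rho n 1 4 = 0 - \<i> * n 1 1 1 1 + \<i> * n 1 2 1 2 - \<i> * n 2 1 2 1 + \<i> * n 2 2 2 2"
  "rho n 2 1 = \<i> * n 1 1 2 1 + \<i> * n 1 2 2 2 + \<i> * n 2 1 1 1 + \<i> * n 2 2 1 2"
  "rho n 2 2 = n 1 1 2 2 + n 1 2 2 1 + n 2 1 1 2 + n 2 2 1 1"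
  "rho n 2 3 = \<i> * n 1 1 2 2 - \<i> * n 1 2 2 1 + \<i> * n 2 1 1 2 - \<i> * n 2 2 1 1"
  "rho n 2 4 = n 1 1 2 1 - n 1 2 2 2 + n 2 1 1 1 - n 2 2 1 2"
  "rho n 3 1 = n 1 1 2 1 + n 1 2 2 2 - n 2 1 1 1 - n 2 2 1 2"
  "rho n 3 2 = 0 - \<i> * n 1 1 2 2 - \<i> * n 1 2 2 1 + \<i> * n 2 1 1 2 + \<i> * n 2 2 1 1"
  "rho n 3 3 = n 1 1 2 2 - n 1 2 2 1 - n 2 1 1 2 + n 2 2 1 1"
  "rho n 3 4 = 0 - \<i> * n 1 1 2 1 + \<i> * n 1 2 2 2 + \<i> * n 2 1 1 1 - \<i> * n 2 2 1 2"
  "rho n 4 1 = \<i> * n 1 1 1 1 + \<i> * n 1 2 1 2 - \<i> * n 2 1 2 1 - \<i> * n 2 2 2 2"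
  "rho n 4 2 = n 1 1 1 2 + n 1 2 1 1 - n 2 1 2 2 - n 2 2 2 1"
  "rho n 4 3 = \<i> * n 1 1 1 2 - \<i> * n 1 2 1 1 - \<i> * n 2 1 2 2 + \<i> * n 2 2 2 1"
  "rho n 4 4 = n 1 1 1 1 - n 1 2 1 2 - n 2 1 2 1 + n 2 2 2 2"
  by (simp_all add: rho_def sum_2 Yb_simps algebra_simps)

lemma Pf_explicit:
  "Pf k 1 1 = k 1 1 1 1 + k 1 2 1 2 + k 2 1 2 1 + k 2 2 2 2"
  "Pf k 1 2 = \<i> * k 1 1 1 2 + \<i> * k 1 2 1 1 + \<i> * k 2 1 2 2 + \<i> * k 2 2 2 1"
  "Pf k 1 3 = 0 - k 1 1 1 2 + k 1 2 1 1 - k 2 1 2 2 + k 2 2 2 1"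
  "Pf k 1 4 = \<i> * k 1 1 1 1 - \<i> * k 1 2 1 2 + \<i> * k 2 1 2 1 - \<i> * k 2 2 2 2"
  "Pf k 2 1 = 0 - \<i> * k 1 1 2 1 - \<i> * k 1 2 2 2 - \<i> * k 2 1 1 1 - \<i> * k 2 2 1 2"
  "Pf k 2 2 = k 1 1 2 2 + k 1 2 2 1 + k 2 1 1 2 + k 2 2 1 1"
  "Pf k 2 3 = \<i> * k 1 1 2 2 - \<i> * k 1 2 2 1 + \<i> * k 2 1 1 2 - \<i> * k 2 2 1 1"
  "Pf k 2 4 = k 1 1 2 1 - k 1 2 2 2 + k 2 1 1 1 - k 2 2 1 2"
  "Pf k 3 1 = 0 - k 1 1 2 1 - k 1 2 2 2 + k 2 1 1 1 + k 2 2 1 2"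
  "Pf k 3 2 = 0 - \<i> * k 1 1 2 2 - \<i> * k 1 2 2 1 + \<i> * k 2 1 1 2 + \<i> * k 2 2 1 1"
  "Pf k 3 3 = k 1 1 2 2 - k 1 2 2 1 - k 2 1 1 2 + k 2 2 1 1"
  "Pf k 3 4 = 0 - \<i> * k 1 1 2 1 + \<i> * k 1 2 2 2 + \<i> * k 2 1 1 1 - \<i> * k 2 2 1 2"
  "Pf k 4 1 = 0 - \<i> * k 1 1 1 1 - \<i> * k 1 2 1 2 + \<i> * k 2 1 2 1 + \<i> * k 2 2 2 2"
  "Pf k 4 2 = k 1 1 1 2 + k 1 2 1 1 - k 2 1 2 2 - k 2 2 2 1"
  "Pf k 4 3 = \<i> * k 1 1 1 2 - \<i> * k 1 2 1 1 - \<i> * k 2 1 2 2 + \<i> * k 2 2 2 1"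
  "Pf k 4 4 = k 1 1 1 1 - k 1 2 1 2 - k 2 1 2 1 + k 2 2 2 2"
  by (simp_all add: Pf_def sum_2 Yb_simps algebra_simps)

lemma key_identity:
  fixes n k :: "2\<Rightarrow>2\<Rightarrow>2\<Rightarrow>2\<Rightarrow>complex"
  assumes h1: "n 2 1 1 1 = cnj (n 1 2 1 1)" and h2: "n 2 1 1 2 = cnj (n 1 2 2 1)"
    and h3: "n 2 1 2 1 = cnj (n 1 2 1 2)" and h4: "n 2 1 2 2 = cnj (n 1 2 2 2)"
    and h5: "n 1 1 2 1 = cnj (n 1 1 1 2)" and h6: "n 2 2 2 1 = cnj (n 2 2 1 2)"
    and r1: "Im (n 1 1 1 1) = 0" and r2: "Im (n 2 2 2 2) = 0"
    and r3: "Im (n 1 1 2 2) = 0" and r4: "Im (n 2 2 1 1) = 0"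
    and t1: "n 1 1 2 2 = 1 - n 1 1 1 1" and t2: "n 2 2 2 2 = 1 - n 2 2 1 1"
    and t3: "n 1 2 2 2 = - n 1 2 1 1"
    and c1: "k 1 1 2 2 = 1 - k 1 1 1 1" and c2: "k 2 2 2 2 = 1 - k 2 2 1 1"
    and c3: "k 1 2 2 2 = - k 1 2 1 1" and c4: "k 2 1 2 2 = - k 2 1 1 1"
  shows "(\<Sum>m\<in>UNIV. \<Sum>v\<in>UNIV. Re (rho n m v + rho n v m) / 2 * Re (Pf k m v)) =
     4 * Re (\<Sum>a\<in>UNIV. \<Sum>b\<in>UNIV. \<Sum>c\<in>UNIV. \<Sum>d\<in>UNIV. n a b c d * k c d a b)"
  using r1 r2 r3 r4
  apply (simp only: sum_4 sum_2 rho_explicit Pf_explicit)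
  apply (simp add: h1 h2 h3 h4 h5 h6 t1 t2 t3 c1 c2 c3 c4)
  apply (simp add: field_simps)
  done


lemma dsum1:
  fixes g :: "'a::finite \<Rightarrow> real" and k :: 'a
  shows "(\<Sum>i\<in>UNIV. \<Sum>j\<in>UNIV. if i = k then g j else 0) = (\<Sum>j\<in>UNIV. g j)"
proof -
  have "(\<Sum>i\<in>UNIV. \<Sum>j\<in>UNIV. if i = k then g j else 0) = (\<Sum>i\<in>UNIV. if i = k then (\<Sum>j\<in>UNIV. g j) else 0)"
    by (rule sum.cong) auto
  then show ?thesis by simp
qed

lemma dsum2: "(\<Sum>i\<in>UNIV. \<Sum>j\<in>(UNIV::'a::finite set). if j = k then g i else 0) = (\<Sum>i\<in>UNIV. g i :: real)"
  by simp

lemma dsum3: "(\<Sum>i\<in>(UNIV::'a::finite set). \<Sum>j\<in>(UNIV::'a set). if i = k \<and> j = k then c else 0) = (c::real)"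
proof -
  have "(\<Sum>i\<in>(UNIV::'a::finite set). \<Sum>j\<in>(UNIV::'a set). if i = k \<and> j = k then c else 0) = (\<Sum>i\<in>(UNIV::'a::finite set). if i = k then c else 0)"
    by (rule sum.cong) auto
  then show ?thesis by simp
qed

lemma qf_shift:
  fixes f :: "'a::finite \<Rightarrow> 'a \<Rightarrow> real"
  shows "(\<Sum>i\<in>UNIV. \<Sum>j\<in>UNIV. (y i + (if i = k then t else 0)) * f i j * (y j + (if j = k then t else 0)))
   = (\<Sum>i\<in>UNIV. \<Sum>j\<in>UNIV. y i * f i j * y j) + t * (\<Sum>j\<in>UNIV. f k j * y j) + t * (\<Sum>i\<in>UNIV. y i * f i k) + t^2 * f k k"
proof -
  have "(\<Sum>i\<in>UNIV. \<Sum>j\<in>UNIV. (y i + (if i = k then t else 0)) * f i j * (y j + (if j = k then t else 0)))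
     = (\<Sum>i\<in>UNIV. \<Sum>j\<in>UNIV. y i * f i j * y j + (if i = k then t * f k j * y j else 0)
          + (if j = k then t * y i * f i k else 0) + (if i = k \<and> j = k then t^2 * f k k else 0))"
    by (intro sum.cong refl) (auto simp: algebra_simps power2_eq_square)
  also have "\<dots> = (\<Sum>i\<in>UNIV. \<Sum>j\<in>UNIV. y i * f i j * y j) + (\<Sum>i\<in>UNIV. \<Sum>j\<in>UNIV. if i = k then t * f k j * y j else 0)
     + (\<Sum>i\<in>UNIV. \<Sum>j\<in>UNIV. if j = k then t * y i * f i k else 0)
     + (\<Sum>i\<in>UNIV. \<Sum>j\<in>UNIV. if i = k \<and> j = k then t^2 * f k k else 0)"
    by (simp only: sum.distrib)
  also have "\<dots> = (\<Sum>i\<in>UNIV. \<Sum>j\<in>UNIV. y i * f i j * y j) + t * (\<Sum>j\<in>UNIV. f k j * y j) + t * (\<Sum>i\<in>UNIV. y i * f i k) + t^2 * f k k"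
    by (simp only: dsum1 dsum2 dsum3 sum_distrib_left mult.assoc)
  finally show ?thesis .
qed

lemma qf_delta:
  fixes H :: "'a::finite \<Rightarrow> 'a \<Rightarrow> real"
  shows "(\<Sum>i\<in>UNIV. \<Sum>j\<in>UNIV. (if i = p then 1 else 0) * H i j * (if j = p then 1 else 0)) = H p p"
proof -
  have "(\<Sum>i\<in>UNIV. \<Sum>j\<in>UNIV. (if i = p then 1 else 0) * H i j * (if j = p then 1 else 0)) =
      (\<Sum>i\<in>UNIV. \<Sum>j\<in>UNIV. if i = p \<and> j = p then H p p else 0)"
    by (intro sum.cong refl) auto
  then show ?thesis by (simp only: dsum3)
qed

lemma lin_delta: "(\<Sum>j\<in>(UNIV::'a::finite set). H j * (if j = p then 1 else 0)) = (H p :: real)"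
proof -
  have "(\<Sum>j\<in>(UNIV::'a::finite set). H j * (if j = p then 1 else 0)) = (\<Sum>j\<in>(UNIV::'a::finite set). if j = p then H p else 0)"
    by (intro sum.cong refl) auto
  then show ?thesis by simp
qed

lemma lin_delta2: "(\<Sum>j\<in>(UNIV::'a::finite set). (if j = p then 1 else 0) * H j) = (H p :: real)"
  using lin_delta[of H p] by (simp add: mult.commute)

lemma psd_trace_aux:
  fixes R :: "'a::finite \<Rightarrow> 'a \<Rightarrow> real"
  assumes psdR: "\<And>y. 0 \<le> (\<Sum>i\<in>UNIV. \<Sum>j\<in>UNIV. y i * R i j * y j)"
  shows "finite K \<Longrightarrow> \<forall>H. (\<forall>i j. H i j = H j i) \<and> (\<forall>y. 0 \<le> (\<Sum>i\<in>UNIV. \<Sum>j\<in>UNIV. y i * H i j * y j))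
      \<and> (\<forall>i j. i \<notin> K \<or> j \<notin> K \<longrightarrow> H i j = 0) \<longrightarrow> 0 \<le> (\<Sum>i\<in>UNIV. \<Sum>j\<in>UNIV. H i j * R i j)"
proof (induction K rule: finite_induct)
  case empty
  then show ?case by simp
next
  case (insert k K)
  show ?case
  proof (intro allI impI, elim conjE)
    fix H :: "'a \<Rightarrow> 'a \<Rightarrow> real"
    assume sym: "\<forall>i j. H i j = H j i" and psd: "\<forall>y. 0 \<le> (\<Sum>i\<in>UNIV. \<Sum>j\<in>UNIV. y i * H i j * y j)"
      and supp: "\<forall>i j. i \<notin> insert k K \<or> j \<notin> insert k K \<longrightarrow> H i j = 0"
    have shift: "0 \<le> (\<Sum>i\<in>UNIV. \<Sum>j\<in>UNIV. y i * H i j * y j) + 2 * t * (\<Sum>j\<in>UNIV. H k j * y j) + t^2 * H k k" for y t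
    proof -
      have "(\<Sum>i\<in>UNIV. y i * H i k) = (\<Sum>j\<in>UNIV. H k j * y j)"
        using sym by (simp add: mult.commute)
      then show ?thesis
        using psd[rule_format, of "\<lambda>i. y i + (if i = k then t else 0)"] qf_shift[of y k t H] by simp
    qed
    have dk: "0 \<le> H k k" using shift[of "\<lambda>_. 0" 1] by simp
    show "0 \<le> (\<Sum>i\<in>UNIV. \<Sum>j\<in>UNIV. H i j * R i j)"
    proof (cases "H k k = 0")
      case True
      have hz: "H k j = 0" for j
      proof (rule ccontr)
        assume ne: "H k j \<noteq> 0"
        have "0 \<le> H j j + 2 * t * H k j" for t
          using shift[of "\<lambda>i. if i = j then 1 else 0" t] True by (simp only: qf_delta lin_delta lin_delta2)
        from this[of "- (H j j + 1) / (2 * H k j)"] ne show False by (simp add: field_simps)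
      qed
      have "\<forall>i j. i \<notin> K \<or> j \<notin> K \<longrightarrow> H i j = 0"
        using supp hz sym by (metis insert_iff)
      then show ?thesis using insert.IH sym psd by blast
    next
      case False
      then have dpos: "0 < H k k" using dk by simp
      define H' where "H' i j = H i j - H k i * H k j / H k k" for i j
      have sym': "\<forall>i j. H' i j = H' j i" using sym by (simp add: H'_def mult.commute)
      have psd': "\<forall>y. 0 \<le> (\<Sum>i\<in>UNIV. \<Sum>j\<in>UNIV. y i * H' i j * y j)"
      proof
        fix y :: "'a \<Rightarrow> real"
        define s where "s = (\<Sum>j\<in>UNIV. H k j * y j)"
        have "(\<Sum>i\<in>UNIV. \<Sum>j\<in>UNIV. y i * H' i j * y j) = (\<Sum>i\<in>UNIV. \<Sum>j\<in>UNIV. y i * H i j * y j) - s^2 / H k k"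
        proof -
          have "(\<Sum>i\<in>UNIV. \<Sum>j\<in>UNIV. y i * H' i j * y j) = (\<Sum>i\<in>UNIV. \<Sum>j\<in>UNIV. y i * H i j * y j - (y i * H k i) * (H k j * y j) / H k k)"
            by (simp add: H'_def algebra_simps)
          also have "\<dots> = (\<Sum>i\<in>UNIV. \<Sum>j\<in>UNIV. y i * H i j * y j) - (\<Sum>i\<in>UNIV. y i * H k i) * s / H k k"
            by (simp add: sum_subtractf sum_divide_distrib[symmetric] sum_distrib_left[symmetric] sum_distrib_right[symmetric] s_def)
          also have "(\<Sum>i\<in>UNIV. y i * H k i) = s" by (simp add: s_def mult.commute)
          finally show ?thesis by (simp add: power2_eq_square)
        qed
        moreover have "0 \<le> (\<Sum>i\<in>UNIV. \<Sum>j\<in>UNIV. y i * H i j * y j) - s^2 / H k k"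
        proof -
          have sh: "0 \<le> (\<Sum>i\<in>UNIV. \<Sum>j\<in>UNIV. y i * H i j * y j) + 2 * (- s / H k k) * s + (- s / H k k)^2 * H k k"
            using shift[of y "- s / H k k"] unfolding s_def .
          have "2 * (- s / H k k) * s + (- s / H k k)^2 * H k k = - (s^2 / H k k)"
            using dpos by (simp add: field_simps power2_eq_square)
          then show ?thesis using sh by linarith
        qed
        ultimately show "0 \<le> (\<Sum>i\<in>UNIV. \<Sum>j\<in>UNIV. y i * H' i j * y j)" by simp
      qed
      have supp': "\<forall>i j. i \<notin> K \<or> j \<notin> K \<longrightarrow> H' i j = 0"
      proof (intro allI impI)
        fix i j assume ij: "i \<notin> K \<or> j \<notin> K"
        have z: "H k l = 0" if "l \<notin> insert k K" for l using supp that by blast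
        have z2: "H l m = 0" if "l \<notin> insert k K \<or> m \<notin> insert k K" for l m using supp that by blast
        show "H' i j = 0"
        proof (cases "i \<notin> K")
          case True
          show ?thesis
          proof (cases "i = k")
            case True then show ?thesis using dpos by (simp add: H'_def)
          next
            case False then show ?thesis using \<open>i \<notin> K\<close> z z2 by (simp add: H'_def)
          qed
        next
          case False
          then have "j \<notin> K" using ij by blast
          show ?thesis
          proof (cases "j = k")
            case True then show ?thesis using dpos sym by (simp add: H'_def)
          next
            case False then show ?thesis using \<open>j \<notin> K\<close> z z2 by (simp add: H'_def)
          qed
        qed
      qed
      have IH: "0 \<le> (\<Sum>i\<in>UNIV. \<Sum>j\<in>UNIV. H' i j * R i j)"
        using insert.IH sym' psd' supp' by blast
      have hR: "0 \<le> (\<Sum>i\<in>UNIV. \<Sum>j\<in>UNIV. H k i * R i j * H k j)" by (rule psdR)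
      have "(\<Sum>i\<in>UNIV. \<Sum>j\<in>UNIV. H i j * R i j) = (\<Sum>i\<in>UNIV. \<Sum>j\<in>UNIV. H' i j * R i j)
          + (\<Sum>i\<in>UNIV. \<Sum>j\<in>UNIV. H k i * R i j * H k j) / H k k"
      proof -
        have e1: "(\<Sum>i\<in>UNIV. \<Sum>j\<in>UNIV. H' i j * R i j) = (\<Sum>i\<in>UNIV. \<Sum>j\<in>UNIV. H i j * R i j)
            - (\<Sum>i\<in>UNIV. \<Sum>j\<in>UNIV. H k i * H k j * R i j / H k k)"
          by (simp add: H'_def left_diff_distrib sum_subtractf)
        have e2: "(\<Sum>i\<in>UNIV. \<Sum>j\<in>UNIV. H k i * R i j * H k j) / H k k = (\<Sum>i\<in>UNIV. \<Sum>j\<in>UNIV. H k i * H k j * R i j / H k k)"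
          by (simp add: sum_divide_distrib mult_ac)
        show ?thesis using e1 e2 by linarith
      qed
      then show ?thesis using IH hR dpos by simp
    qed
  qed
qed

lemma psd_trace:
  fixes H R :: "'a::finite \<Rightarrow> 'a \<Rightarrow> real"
  assumes symH: "\<And>i j. H i j = H j i"
    and psdH: "\<And>y. 0 \<le> (\<Sum>i\<in>UNIV. \<Sum>j\<in>UNIV. y i * H i j * y j)"
    and psdR: "\<And>y. 0 \<le> (\<Sum>i\<in>UNIV. \<Sum>j\<in>UNIV. y i * R i j * y j)"
  shows "0 \<le> (\<Sum>i\<in>UNIV. \<Sum>j\<in>UNIV. H i j * R i j)"
  using psd_trace_aux[OF psdR, of UNIV] symH psdH by auto


definition idx :: "nat \<Rightarrow> 2" where "idx i = (if i = 0 then 1 else 2)"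
definition Bm :: "nat \<Rightarrow> nat \<Rightarrow> qop" where "Bm i j = Em (idx i) (idx j)"
definition chE :: "(qop \<Rightarrow> qop) \<Rightarrow> 2 \<Rightarrow> 2 \<Rightarrow> 2 \<Rightarrow> 2 \<Rightarrow> complex" where
  "chE \<Phi> a b c d = \<Phi> (Em a b) $ c $ d"

lemma sum_lt2: "(\<Sum>i<2. f i) = f 0 + f (1::nat)"
  by (simp add: numeral_2_eq_2)

lemma sum_pair2: "(\<Sum>\<alpha>\<in>(UNIV::(2\<times>2) set). f \<alpha>) = f (1,1) + f (1,2) + f (2,1) + f (2,2)"
  by (simp add: UNIV_Times_UNIV[symmetric] sum.cartesian_product' sum_2 add.assoc del: UNIV_Times_UNIV)

lemma two_ne: "(1::2) \<noteq> 2" by simp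

lemma block_psd_Bm: "block_psd 2 Bm"
proof -
  have "block_qform 2 Bm v = cnj (v 0 $ 1 + v 1 $ 2) * (v 0 $ 1 + v 1 $ 2)" for v
    by (simp add: block_qform_def sum_lt2 sum_2 Bm_def Em_def idx_def algebra_simps)
  also have "cnj z * z = complex_of_real ((norm z)^2)" for z
    using complex_norm_square[of z] by (simp add: mult.commute)
  finally show ?thesis unfolding block_psd_def by simp
qed

lemma choi_form:
  "block_qform 2 (\<lambda>i j. \<Phi> (Bm i j)) (\<lambda>i. \<chi> k. z (idx i, k)) =
    (\<Sum>\<alpha>\<in>UNIV. \<Sum>\<beta>\<in>UNIV. cnj (z \<alpha>) * chE \<Phi> (fst \<alpha>) (fst \<beta>) (snd \<alpha>) (snd \<beta>) * z \<beta>)"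
  by (simp add: block_qform_def sum_lt2 sum_2 sum_pair2 Bm_def idx_def chE_def algebra_simps)

lemma cp_form:
  assumes "completely_positive \<Phi>"
  shows "Im (\<Sum>\<alpha>\<in>UNIV. \<Sum>\<beta>\<in>UNIV. cnj (z \<alpha>) * chE \<Phi> (fst \<alpha>) (fst \<beta>) (snd \<alpha>) (snd \<beta>) * z \<beta>) = 0"
    and "0 \<le> Re (\<Sum>\<alpha>\<in>UNIV. \<Sum>\<beta>\<in>UNIV. cnj (z \<alpha>) * chE \<Phi> (fst \<alpha>) (fst \<beta>) (snd \<alpha>) (snd \<beta>) * z \<beta>)"
proof -
  have "block_psd 2 (\<lambda>i j. \<Phi> (Bm i j))"
    using assms block_psd_Bm unfolding completely_positive_def by blast
  then show "Im (\<Sum>\<alpha>\<in>UNIV. \<Sum>\<beta>\<in>UNIV. cnj (z \<alpha>) * chE \<Phi> (fst \<alpha>) (fst \<beta>) (snd \<alpha>) (snd \<beta>) * z \<beta>) = 0"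
    and "0 \<le> Re (\<Sum>\<alpha>\<in>UNIV. \<Sum>\<beta>\<in>UNIV. cnj (z \<alpha>) * chE \<Phi> (fst \<alpha>) (fst \<beta>) (snd \<alpha>) (snd \<beta>) * z \<beta>)"
    unfolding block_psd_def choi_form[symmetric] by blast+
qed

lemma cp_herm:
  assumes "completely_positive \<Phi>"
  shows "chE \<Phi> b a d c = cnj (chE \<Phi> a b c d)"
  using herm_from_real[of "\<lambda>\<alpha> \<beta>. chE \<Phi> (fst \<alpha>) (fst \<beta>) (snd \<alpha>) (snd \<beta>)" "(a,c)" "(b,d)"] cp_form(1)[OF assms]
  by simp


definition Ym :: "real^4 \<Rightarrow> qop" where
  "Ym y = (\<chi> a c. \<Sum>m\<in>UNIV. complex_of_real (y$m) * Yb m $ a $ c)"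

lemma Ym_simps:
  "Ym y $ 1 $ 1 = Complex (y$1) (y$4)" "Ym y $ 1 $ 2 = Complex (y$3) (y$2)"
  "Ym y $ 2 $ 1 = Complex (- y$3) (y$2)" "Ym y $ 2 $ 2 = Complex (y$1) (- y$4)"
  by (simp_all add: Ym_def sum_4 Yb_simps complex_eq_iff)

lemma Gf_Ad:
  "Gf (\<lambda>A. Ym y ** N A ** adj (Ym y)) =
    (\<Sum>i\<in>UNIV. \<Sum>j\<in>UNIV. complex_of_real (y$i * y$j) * rho (chE N) i j)"
  apply (simp only: Gf_def matrix_matrix_mult_def adj_def sum_2 vec_lambda_beta Ym_simps sum_4 rho_explicit chE_def)
  apply (simp add: complex_eq_iff algebra_simps)
  done

lemma qform_S:
  "(\<Sum>i\<in>UNIV. \<Sum>j\<in>UNIV. y$i * (Re (rho (chE N) i j + rho (chE N) j i) / 2) * y$j) =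
     Re (Gf (\<lambda>A. Ym y ** N A ** adj (Ym y)))"
  unfolding Gf_Ad by (simp add: sum_4 algebra_simps)

definition zY :: "real^4 \<Rightarrow> 2 \<times> 2 \<Rightarrow> complex" where "zY y \<alpha> = Ym y $ snd \<alpha> $ fst \<alpha>"

lemma qform_R:
  "(\<Sum>i\<in>UNIV. \<Sum>j\<in>UNIV. y$i * Re (Pf (chE C) i j) * y$j) =
     Re (\<Sum>\<alpha>\<in>UNIV. \<Sum>\<beta>\<in>UNIV. cnj (zY y \<alpha>) * chE C (fst \<alpha>) (fst \<beta>) (snd \<alpha>) (snd \<beta>) * zY y \<beta>)"
  apply (simp only: sum_pair2 zY_def fst_conv snd_conv Ym_simps sum_4 Pf_explicit)
  apply (simp add: algebra_simps)
  done

lemma tp_ch: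
  assumes "trace_preserving \<Phi>"
  shows "chE \<Phi> c d 1 1 + chE \<Phi> c d 2 2 = (if c = d then 1 else 0)"
proof -
  have "mtrace (\<Phi> (Em c d)) = mtrace (Em c d)" using assms by (simp add: trace_preserving_def)
  then show ?thesis by (simp add: mtrace_def sum_2 chE_def Em_def) (metis exhaust_2)
qed

lemma Gf_comp:
  assumes "clinear_map C"
  shows "Gf (\<lambda>A. C (N A)) = (\<Sum>a\<in>UNIV. \<Sum>b\<in>UNIV. \<Sum>c\<in>UNIV. \<Sum>d\<in>UNIV. chE N a b c d * chE C c d a b)"
  unfolding Gf_def
  by (subst clin_expand[OF assms]) (simp add: sum_2 sm_def chE_def algebra_simps)

lemma Ym_unitary:
  assumes "norm x = 1"
  shows "unitary_op (Ym x)"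
proof -
  have "x \<bullet> x = 1" using assms by (simp add: norm_eq_sqrt_inner)
  then have s: "x$1 * x$1 + x$2 * x$2 + x$3 * x$3 + x$4 * x$4 = 1"
    by (simp add: inner_vec_def sum_4)
  show ?thesis
    unfolding unitary_op_def
    by (simp add: vec_eq_iff forall_2 matrix_matrix_mult_def adj_def sum_2 Ym_simps mat_def complex_eq_iff
        algebra_simps s[simplified algebra_simps])
qed

lemma trPf:
  assumes "trace_preserving C"
  shows "(\<Sum>m\<in>UNIV. Re (Pf (chE C) m m)) = 4"
  using tp_ch[OF assms, of 1 1] tp_ch[OF assms, of 2 2]
  by (simp add: sum_4 Pf_explicit complex_eq_iff) 


definition Sm :: "(qop \<Rightarrow> qop) \<Rightarrow> 4 \<Rightarrow> 4 \<Rightarrow> real" where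
  "Sm N i j = Re (rho (chE N) i j + rho (chE N) j i) / 2"

definition gq :: "(qop \<Rightarrow> qop) \<Rightarrow> real^4 \<Rightarrow> real" where
  "gq N y = (\<Sum>i\<in>UNIV. \<Sum>j\<in>UNIV. y$i * Sm N i j * y$j)"

lemma gq_eq: "gq N y = Re (Gf (\<lambda>A. Ym y ** N A ** adj (Ym y)))"
  unfolding gq_def Sm_def by (rule qform_S)

lemma gq_scale: "gq N (c *\<^sub>R y) = c^2 * gq N y"
proof -
  have "gq N (c *\<^sub>R y) = (\<Sum>i\<in>UNIV. \<Sum>j\<in>UNIV. c^2 * (y$i * Sm N i j * y$j))"
    unfolding gq_def by (intro sum.cong refl) (simp add: power2_eq_square)
  then show ?thesis by (simp add: gq_def sum_distrib_left)
qed

lemma gq_cont: "continuous_on UNIV (gq N)"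
  unfolding gq_def by (intro continuous_intros)

lemma norm_sq4: "(norm (y::real^4))^2 = (\<Sum>i\<in>UNIV. y$i * y$i)"
  by (simp add: power2_norm_eq_inner inner_vec_def)

lemma gq_max:
  obtains x where "norm x = 1" "\<And>y. gq N y \<le> gq N x * (norm y)^2"
proof -
  have "\<exists>x\<in>sphere (0::real^4) 1. \<forall>y\<in>sphere 0 1. gq N y \<le> gq N x"
    by (rule continuous_attains_sup) (auto intro: continuous_on_subset[OF gq_cont])
  then obtain x where x: "norm x = 1" "\<And>y. norm y = 1 \<Longrightarrow> gq N y \<le> gq N x" by auto
  have "gq N y \<le> gq N x * (norm y)^2" for y
  proof (cases "y = 0")
    case True then show ?thesis by (simp add: gq_def)
  next
    case False
    have "gq N (y /\<^sub>R norm y) \<le> gq N x" using x(2)[of "y /\<^sub>R norm y"] False by simp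
    moreover have "gq N y = (norm y)^2 * gq N (y /\<^sub>R norm y)"
      using False by (simp add: gq_scale power2_eq_square field_simps)
    ultimately show ?thesis using False by (simp add: mult.commute mult_left_mono)
  qed
  then show ?thesis using that x(1) by blast
qed

lemma main_ineq:
  assumes N: "TPCP N" and C: "TPCP C" and x: "\<And>y. gq N y \<le> gq N x * (norm y)^2"
  shows "Re (Gf (\<lambda>A. C (N A))) \<le> gq N x"
proof -
  define mm where "mm = gq N x"
  define n where "n = chE N"
  define k where "k = chE C"
  have cpN: "completely_positive N" and tpN: "trace_preserving N" using N by (auto simp: TPCP_def)
  have cpC: "completely_positive C" and tpC: "trace_preserving C" using C by (auto simp: TPCP_def)
  have linC: "clinear_map C" using cpC by (simp add: completely_positive_def)
  define H where "H i j = (if i = j then mm else 0) - Sm N i j" for i j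
  define R where "R i j = Re (Pf k i j)" for i j
  have symH: "\<And>i j. H i j = H j i" by (simp add: H_def Sm_def add.commute)
  have psdH: "0 \<le> (\<Sum>i\<in>UNIV. \<Sum>j\<in>UNIV. y i * H i j * y j)" for y
  proof -
    define yv where "yv = ((\<chi> i. y i) :: real^4)"
    have "(\<Sum>i\<in>UNIV. \<Sum>j\<in>UNIV. y i * H i j * y j) = mm * (norm yv)^2 - gq N yv"
      by (simp add: H_def gq_def norm_sq4 yv_def sum_4 algebra_simps)
    then show ?thesis using x[of yv] by (simp add: mm_def mult.commute)
  qed
  have psdR: "0 \<le> (\<Sum>i\<in>UNIV. \<Sum>j\<in>UNIV. y i * R i j * y j)" for y
  proof -
    define yv where "yv = ((\<chi> i. y i) :: real^4)"
    have "(\<Sum>i\<in>UNIV. \<Sum>j\<in>UNIV. y i * R i j * y j) = (\<Sum>i\<in>UNIV. \<Sum>j\<in>UNIV. yv$i * Re (Pf (chE C) i j) * yv$j)"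
      by (simp add: R_def k_def yv_def)
    also have "\<dots> = Re (\<Sum>\<alpha>\<in>UNIV. \<Sum>\<beta>\<in>UNIV. cnj (zY yv \<alpha>) * chE C (fst \<alpha>) (fst \<beta>) (snd \<alpha>) (snd \<beta>) * zY yv \<beta>)"
      by (rule qform_R)
    finally show ?thesis using cp_form(2)[OF cpC] by simp
  qed
  have tr: "0 \<le> (\<Sum>i\<in>UNIV. \<Sum>j\<in>UNIV. H i j * R i j)"
    by (rule psd_trace[OF symH psdH psdR])
  have split: "(\<Sum>i\<in>UNIV. \<Sum>j\<in>UNIV. H i j * R i j) = mm * (\<Sum>i\<in>UNIV. R i i) - (\<Sum>i\<in>UNIV. \<Sum>j\<in>UNIV. Sm N i j * R i j)"
    by (simp add: H_def sum_4 algebra_simps)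
  have diag: "(\<Sum>i\<in>UNIV. R i i) = 4" unfolding R_def k_def by (rule trPf[OF tpC])
  have key: "(\<Sum>i\<in>UNIV. \<Sum>j\<in>UNIV. Sm N i j * R i j) = 4 * Re (\<Sum>a\<in>UNIV. \<Sum>b\<in>UNIV. \<Sum>c\<in>UNIV. \<Sum>d\<in>UNIV. n a b c d * k c d a b)"
    unfolding Sm_def R_def n_def[symmetric]
  proof (rule key_identity)
    have hh: "\<And>a b c d. n b a d c = cnj (n a b c d)" unfolding n_def by (rule cp_herm[OF cpN])
    have rr: "Im (n a a c c) = 0" for a c
    proof -
      have "n a a c c = cnj (n a a c c)" by (rule hh)
      then show ?thesis by (simp add: complex_eq_iff)
    qed
    have tt: "\<And>c d. n c d 1 1 + n c d 2 2 = (if c = d then 1 else 0)" unfolding n_def by (rule tp_ch[OF tpN])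
    have cc: "\<And>c d. k c d 1 1 + k c d 2 2 = (if c = d then 1 else 0)" unfolding k_def by (rule tp_ch[OF tpC])
    show "n 2 1 1 1 = cnj (n 1 2 1 1)" "n 2 1 1 2 = cnj (n 1 2 2 1)" "n 2 1 2 1 = cnj (n 1 2 1 2)"
      "n 2 1 2 2 = cnj (n 1 2 2 2)" "n 1 1 2 1 = cnj (n 1 1 1 2)" "n 2 2 2 1 = cnj (n 2 2 1 2)"
      by (rule hh)+
    show "Im (n 1 1 1 1) = 0" "Im (n 2 2 2 2) = 0" "Im (n 1 1 2 2) = 0" "Im (n 2 2 1 1) = 0"
      by (rule rr)+
    show "n 1 1 2 2 = 1 - n 1 1 1 1" using tt[of 1 1] by (simp add: eq_diff_eq add.commute)
    show "n 2 2 2 2 = 1 - n 2 2 1 1" using tt[of 2 2] by (simp add: eq_diff_eq add.commute)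
    show "n 1 2 2 2 = - n 1 2 1 1" using tt[of 1 2] by (simp add: add_eq_0_iff)
    show "k 1 1 2 2 = 1 - k 1 1 1 1" using cc[of 1 1] by (simp add: eq_diff_eq add.commute)
    show "k 2 2 2 2 = 1 - k 2 2 1 1" using cc[of 2 2] by (simp add: eq_diff_eq add.commute)
    show "k 1 2 2 2 = - k 1 2 1 1" using cc[of 1 2] by (simp add: add_eq_0_iff)
    show "k 2 1 2 2 = - k 2 1 1 1" using cc[of 2 1] by (simp add: add_eq_0_iff)
  qed
  have G: "Gf (\<lambda>A. C (N A)) = (\<Sum>a\<in>UNIV. \<Sum>b\<in>UNIV. \<Sum>c\<in>UNIV. \<Sum>d\<in>UNIV. n a b c d * k c d a b)"
    unfolding n_def k_def by (rule Gf_comp[OF linC])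
  show ?thesis using tr split diag key G by (simp add: mm_def)
qed

lemma Ad_clinear: "clinear_map (\<lambda>A. W ** A ** adj W)"
  unfolding clinear_map_def
proof (intro conjI allI)
  show "W ** (A + B) ** adj W = W ** A ** adj W + W ** B ** adj W" for A B
    by (simp add: vec_eq_iff matrix_matrix_mult_def sum_2 algebra_simps)
  show "W ** (\<chi> i j. c * A $ i $ j) ** adj W = (\<chi> i j. c * (W ** A ** adj W) $ i $ j)" for c A
    by (simp add: vec_eq_iff matrix_matrix_mult_def sum_2 algebra_simps)
qed

lemma unitary_trace:
  assumes "unitary_op W"
  shows "mtrace (W ** X ** adj W) = mtrace X"
proof -
  have u: "adj W ** W = mat 1" using assms by (simp add: unitary_op_def)
  have "mtrace (W ** X ** adj W) = (\<Sum>k\<in>UNIV. \<Sum>l\<in>UNIV. X$k$l * (adj W ** W)$l$k)"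
    by (simp add: mtrace_def matrix_matrix_mult_def adj_def sum_2 algebra_simps)
  then show ?thesis by (simp add: u mat_def sum_2 mtrace_def)
qed

theorem theorem1:
  fixes \<N> :: "qop \<Rightarrow> qop"
  assumes "TPCP \<N>"
  shows "\<exists>W. unitary_op W \<and>
           (\<forall>\<C>. TPCP \<C> \<longrightarrow> avg_fidelity \<N> \<C> \<le> avg_fidelity \<N> (\<lambda>\<rho>. W ** \<rho> ** adj W))"
proof -
  obtain x where x1: "norm x = 1" and xm: "\<And>y. gq \<N> y \<le> gq \<N> x * (norm y)^2"
    using gq_max[where N = \<N>] by blast
  define W where "W = Ym x"
  have uW: "unitary_op W" unfolding W_def by (rule Ym_unitary[OF x1])
  have cpN: "completely_positive \<N>" and tpN: "trace_preserving \<N>" using assms by (auto simp: TPCP_def)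
  have linN: "clinear_map \<N>" using cpN by (simp add: completely_positive_def)
  have trE: "mtrace (Em a a) = 1" for a by (simp add: mtrace_def sum_2 Em_def) (metis exhaust_2)
  have FW: "avg_fidelity \<N> (\<lambda>\<rho>. W ** \<rho> ** adj W) = 4 * aa / 3 * (2 + gq \<N> x)"
  proof -
    have lin: "clinear_map (\<lambda>A. W ** \<N> A ** adj W)"
      using clin_comp[OF Ad_clinear linN] by simp
    have tr: "mtrace (W ** \<N> (Em a a) ** adj W) = 1" for a
      using unitary_trace[OF uW] tpN trE by (simp add: trace_preserving_def)
    show ?thesis
      unfolding avg_fidelity_def using fid_formula[of "\<lambda>A. W ** \<N> A ** adj W", OF lin tr]
      by (simp add: gq_eq W_def)
  qed
  have "avg_fidelity \<N> \<C> \<le> avg_fidelity \<N> (\<lambda>\<rho>. W ** \<rho> ** adj W)" if C: "TPCP \<C>" for \<C>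
  proof -
    have cpC: "completely_positive \<C>" and tpC: "trace_preserving \<C>" using C by (auto simp: TPCP_def)
    have linC: "clinear_map \<C>" using cpC by (simp add: completely_positive_def)
    have lin: "clinear_map (\<lambda>A. \<C> (\<N> A))" by (rule clin_comp[OF linC linN])
    have tr: "mtrace (\<C> (\<N> (Em a a))) = 1" for a
      using tpC tpN trE by (simp add: trace_preserving_def)
    have FC: "avg_fidelity \<N> \<C> = 4 * aa / 3 * (2 + Re (Gf (\<lambda>A. \<C> (\<N> A))))"
      unfolding avg_fidelity_def using fid_formula[of "\<lambda>A. \<C> (\<N> A)", OF lin tr] by simp
    have le: "Re (Gf (\<lambda>A. \<C> (\<N> A))) \<le> gq \<N> x"
      by (rule main_ineq[OF assms C xm])
    show ?thesis unfolding FC FW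
      using le aa_nonneg by (intro mult_left_mono) auto
  qed
  then show ?thesis using uW by blast
qed


end
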